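(* Let $\mathbf G_*=(\partial:G_1\to G_0)$ be a crossed module, and let $\mathsf H^0(G_0,G_1)=\{a\in G_1:{}^xa=a\ \forall x\in G_0\}$. Then $\partial$ maps $\mathsf H^0(G_0,G_1)$ into $\mathsf Z_{G_1}(G_0)$, and $\partial:\mathsf H^0(G_0,G_1)\to\mathsf Z_{G_1}(G_0)$ with trivial action is a crossed module $\mathbf Z^{Nor}_*(\mathbf G_* )$. Setting $j_1$ to be the inclusion $\mathsf H^0(G_0,G_1)\subseteq G_1$ and $j_0(x)=(x,\mathbf 1)$, the pair $j_*=(j_1,j_0)$ is an injective morphism of crossed modules $\mathbf Z^{Nor}_*(\mathbf G_* )\to\mathbf Z_*(\mathbf G_* )$ which induces an isomorphism on $\pi_1$ and a monomorphism on $\pi_0$.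
   Context: A crossed module: groups $H_1,H_0$, a homomorphism $\partial:H_1\to H_0$ and a left action $(x,a)\mapsto{}^xa$ of $H_0$ on $H_1$ by automorphisms, with $\partial({}^x a)=x\partial(a)x^{-1}$ and ${}^{\partial(b)}a=bab^{-1}$; $\pi_0=H_0/\mathrm{Im}\partial$, $\pi_1=\ker\partial$. A morphism of crossed modules $(\alpha_1,\alpha_0)$ consists of homomorphisms commuting with $\partial$ and satisfying $\alpha_1({}^xa)={}^{\alpha_0(x)}\alpha_1(a)$. $\mathsf Z_{G_1}(G_0)$ is the set of elements $x$ of the centre of $G_0$ with ${}^xa=a$ for all $a\in G_1$. Commutators $[x,t]=xtx^{-1}t^{-1}$. $\mathbf Z_0(\mathbf G_* )$ is the group of pairs $(x,\xi)$, $x\in G_0$, $\xi:G_0\to G_1$ with $\partial\xi(t)=[x,t]$, $\xi(\partial a)={}^xa\,a^{-1}$, $\xi(st)=\xi(s)\,{}^s\xi(t)$, product $(x,\xi)(y,\eta)=(xy,t\mapsto{}^x\eta(t)\xi(t))$; $\mathbf 1$ is the constant map with value $1$. $\mathbf Z_*(\mathbf G_* )$ is the crossed module $\delta:G_1\to\mathbf Z_0(\mathbf G_* )$, $\delta(c)=(\partial c,\ t\mapsto c\,({}^tc)^{-1})$, with action ${}^{(x,\xi)}a={}^xa$. *)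

theory Defs
  imports "HOL-Algebra.Algebra"
begin

definition crossed_module ::
  "'a monoid \<Rightarrow> 'b monoid \<Rightarrow> ('a \<Rightarrow> 'b) \<Rightarrow> ('b \<Rightarrow> 'a \<Rightarrow> 'a) \<Rightarrow> bool" where
  "crossed_module H1 H0 d act \<longleftrightarrow>
     group H1 \<and> group H0 \<and> d \<in> hom H1 H0 \<and>
     (\<forall>x\<in>carrier H0. act x \<in> iso H1 H1) \<and>
     (\<forall>a\<in>carrier H1. act \<one>\<^bsub>H0\<^esub> a = a) \<and>
     (\<forall>x\<in>carrier H0. \<forall>y\<in>carrier H0. \<forall>a\<in>carrier H1.
        act (x \<otimes>\<^bsub>H0\<^esub> y) a = act x (act y a)) \<and>
     (\<forall>x\<in>carrier H0. \<forall>a\<in>carrier H1.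
        d (act x a) = x \<otimes>\<^bsub>H0\<^esub> d a \<otimes>\<^bsub>H0\<^esub> inv\<^bsub>H0\<^esub> x) \<and>
     (\<forall>a\<in>carrier H1. \<forall>b\<in>carrier H1.
        act (d b) a = b \<otimes>\<^bsub>H1\<^esub> a \<otimes>\<^bsub>H1\<^esub> inv\<^bsub>H1\<^esub> b)"

definition cm_morphism ::
  "'a monoid \<Rightarrow> 'b monoid \<Rightarrow> ('a \<Rightarrow> 'b) \<Rightarrow> ('b \<Rightarrow> 'a \<Rightarrow> 'a) \<Rightarrow>
   'c monoid \<Rightarrow> 'd monoid \<Rightarrow> ('c \<Rightarrow> 'd) \<Rightarrow> ('d \<Rightarrow> 'c \<Rightarrow> 'c) \<Rightarrow>
   ('a \<Rightarrow> 'c) \<Rightarrow> ('b \<Rightarrow> 'd) \<Rightarrow> bool" where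
  "cm_morphism H1 H0 d act K1 K0 d' act' f1 f0 \<longleftrightarrow>
     f1 \<in> hom H1 K1 \<and> f0 \<in> hom H0 K0 \<and>
     (\<forall>a\<in>carrier H1. d' (f1 a) = f0 (d a)) \<and>
     (\<forall>x\<in>carrier H0. \<forall>a\<in>carrier H1. f1 (act x a) = act' (f0 x) (f1 a))"

definition pi1 :: "'a monoid \<Rightarrow> 'b monoid \<Rightarrow> ('a \<Rightarrow> 'b) \<Rightarrow> 'a monoid" where
  "pi1 H1 H0 d = H1\<lparr>carrier := kernel H1 H0 d\<rparr>"

definition pi0 :: "'a monoid \<Rightarrow> 'b monoid \<Rightarrow> ('a \<Rightarrow> 'b) \<Rightarrow> 'b set monoid" where
  "pi0 H1 H0 d = H0 Mod (d ` carrier H1)"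

text \<open>Map induced on pi_0 by f0: the coset (Im d) x goes to the coset (Im d') f0(x),
  written as (Im d') f0(C), which is independent of representatives.\<close>
definition pi0_map :: "'c monoid \<Rightarrow> 'd monoid \<Rightarrow> ('c \<Rightarrow> 'd) \<Rightarrow> ('b \<Rightarrow> 'd) \<Rightarrow> 'b set \<Rightarrow> 'd set" where
  "pi0_map K1 K0 d' f0 C = (d' ` carrier K1) <#>\<^bsub>K0\<^esub> (f0 ` C)"

definition commutator :: "'b monoid \<Rightarrow> 'b \<Rightarrow> 'b \<Rightarrow> 'b" where
  "commutator G x t = x \<otimes>\<^bsub>G\<^esub> t \<otimes>\<^bsub>G\<^esub> inv\<^bsub>G\<^esub> x \<otimes>\<^bsub>G\<^esub> inv\<^bsub>G\<^esub> t"

definition Z0 :: "'a monoid \<Rightarrow> 'b monoid \<Rightarrow> ('a \<Rightarrow> 'b) \<Rightarrow> ('b \<Rightarrow> 'a \<Rightarrow> 'a)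
                   \<Rightarrow> ('b \<times> ('b \<Rightarrow> 'a)) monoid" where
  "Z0 G1 G0 d act =
    \<lparr> carrier = {(x, \<xi>). x \<in> carrier G0 \<and> \<xi> \<in> carrier G0 \<rightarrow>\<^sub>E carrier G1 \<and>
                   (\<forall>t\<in>carrier G0. d (\<xi> t) = commutator G0 x t) \<and>
                   (\<forall>a\<in>carrier G1. \<xi> (d a) = act x a \<otimes>\<^bsub>G1\<^esub> inv\<^bsub>G1\<^esub> a) \<and>
                   (\<forall>s\<in>carrier G0. \<forall>t\<in>carrier G0.
                       \<xi> (s \<otimes>\<^bsub>G0\<^esub> t) = \<xi> s \<otimes>\<^bsub>G1\<^esub> act s (\<xi> t))},
      monoid.mult = (\<lambda>(x, \<xi>) (y, \<eta>). (x \<otimes>\<^bsub>G0\<^esub> y,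
                   \<lambda>t\<in>carrier G0. act x (\<eta> t) \<otimes>\<^bsub>G1\<^esub> \<xi> t)),
      monoid.one = (\<one>\<^bsub>G0\<^esub>, \<lambda>t\<in>carrier G0. \<one>\<^bsub>G1\<^esub>) \<rparr>"

definition Zdelta :: "'a monoid \<Rightarrow> 'b monoid \<Rightarrow> ('a \<Rightarrow> 'b) \<Rightarrow> ('b \<Rightarrow> 'a \<Rightarrow> 'a)
                       \<Rightarrow> 'a \<Rightarrow> 'b \<times> ('b \<Rightarrow> 'a)" where
  "Zdelta G1 G0 d act c = (d c, \<lambda>t\<in>carrier G0. c \<otimes>\<^bsub>G1\<^esub> inv\<^bsub>G1\<^esub> (act t c))"

definition Zact :: "('b \<Rightarrow> 'a \<Rightarrow> 'a) \<Rightarrow> 'b \<times> ('b \<Rightarrow> 'a) \<Rightarrow> 'a \<Rightarrow> 'a" where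
  "Zact act p a = act (fst p) a"

definition H0inv :: "'a monoid \<Rightarrow> 'b monoid \<Rightarrow> ('b \<Rightarrow> 'a \<Rightarrow> 'a) \<Rightarrow> 'a set" where
  "H0inv G1 G0 act = {a \<in> carrier G1. \<forall>x\<in>carrier G0. act x a = a}"

definition ZG1 :: "'a monoid \<Rightarrow> 'b monoid \<Rightarrow> ('b \<Rightarrow> 'a \<Rightarrow> 'a) \<Rightarrow> 'b set" where
  "ZG1 G1 G0 act = {x \<in> carrier G0. (\<forall>t\<in>carrier G0. x \<otimes>\<^bsub>G0\<^esub> t = t \<otimes>\<^bsub>G0\<^esub> x) \<and>
                                     (\<forall>a\<in>carrier G1. act x a = a)}"

definition j0 :: "'a monoid \<Rightarrow> 'b monoid \<Rightarrow> 'b \<Rightarrow> 'b \<times> ('b \<Rightarrow> 'a)" where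
  "j0 G1 G0 x = (x, \<lambda>t\<in>carrier G0. \<one>\<^bsub>G1\<^esub>)"

end

theory Submission
  imports Defs
begin

lemma setcompr_cong2: "(\<And>c a. P c a \<Longrightarrow> f c a = g c a) \<Longrightarrow> {f c a | c a. P c a} = {g c a | c a. P c a}"
  by (auto; metis)

locale cmod =
  fixes G1 :: "'a monoid" and G0 :: "'b monoid" and d :: "'a \<Rightarrow> 'b" and act :: "'b \<Rightarrow> 'a \<Rightarrow> 'a"
  assumes cm: "crossed_module G1 G0 d act"
begin

sublocale A: group G1 using cm by (simp add: crossed_module_def)
sublocale B: group G0 using cm by (simp add: crossed_module_def)

lemma d_hom: "d \<in> hom G1 G0" using cm by (simp add: crossed_module_def)
lemma d_closed[simp]: "a \<in> carrier G1 \<Longrightarrow> d a \<in> carrier G0"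
  using d_hom by (auto simp: hom_def)
lemma d_mult[simp]: "a \<in> carrier G1 \<Longrightarrow> b \<in> carrier G1 \<Longrightarrow> d (a \<otimes>\<^bsub>G1\<^esub> b) = d a \<otimes>\<^bsub>G0\<^esub> d b"
  using d_hom by (auto simp: hom_def)
lemma d_one[simp]: "d \<one>\<^bsub>G1\<^esub> = \<one>\<^bsub>G0\<^esub>"
  by (rule hom_one[OF d_hom A.group_axioms B.group_axioms])
lemma d_inv[simp]: "a \<in> carrier G1 \<Longrightarrow> d (inv\<^bsub>G1\<^esub> a) = inv\<^bsub>G0\<^esub> d a"
  by (rule group_hom.hom_inv[OF group_hom.intro[OF A.group_axioms B.group_axioms group_hom_axioms.intro[OF d_hom]]])

lemma act_hom: "x \<in> carrier G0 \<Longrightarrow> act x \<in> hom G1 G1"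
  using cm by (simp add: crossed_module_def iso_def)
lemma act_closed[simp]: "x \<in> carrier G0 \<Longrightarrow> a \<in> carrier G1 \<Longrightarrow> act x a \<in> carrier G1"
  using act_hom by (auto simp: hom_def)
lemma act_mult[simp]: "x \<in> carrier G0 \<Longrightarrow> a \<in> carrier G1 \<Longrightarrow> b \<in> carrier G1 \<Longrightarrow>
   act x (a \<otimes>\<^bsub>G1\<^esub> b) = act x a \<otimes>\<^bsub>G1\<^esub> act x b"
  using act_hom by (auto simp: hom_def)
lemma act_one[simp]: "x \<in> carrier G0 \<Longrightarrow> act x \<one>\<^bsub>G1\<^esub> = \<one>\<^bsub>G1\<^esub>"
  by (rule hom_one[OF act_hom A.group_axioms A.group_axioms])
lemma act_inv[simp]: "x \<in> carrier G0 \<Longrightarrow> a \<in> carrier G1 \<Longrightarrow> act x (inv\<^bsub>G1\<^esub> a) = inv\<^bsub>G1\<^esub> act x a"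
  by (rule group_hom.hom_inv[OF group_hom.intro[OF A.group_axioms A.group_axioms group_hom_axioms.intro[OF act_hom]]])
lemma act_comp: "x \<in> carrier G0 \<Longrightarrow> y \<in> carrier G0 \<Longrightarrow> a \<in> carrier G1 \<Longrightarrow>
   act (x \<otimes>\<^bsub>G0\<^esub> y) a = act x (act y a)"
  using cm by (simp add: crossed_module_def)
lemma d_act: "x \<in> carrier G0 \<Longrightarrow> a \<in> carrier G1 \<Longrightarrow>
   d (act x a) = x \<otimes>\<^bsub>G0\<^esub> d a \<otimes>\<^bsub>G0\<^esub> inv\<^bsub>G0\<^esub> x"
  using cm by (simp add: crossed_module_def)
lemma peiffer: "a \<in> carrier G1 \<Longrightarrow> b \<in> carrier G1 \<Longrightarrow>
   act (d b) a = b \<otimes>\<^bsub>G1\<^esub> a \<otimes>\<^bsub>G1\<^esub> inv\<^bsub>G1\<^esub> b"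
  using cm by (simp add: crossed_module_def)

lemma A_c1[simp]: "x \<in> carrier G1 \<Longrightarrow> y \<in> carrier G1 \<Longrightarrow> inv\<^bsub>G1\<^esub> x \<otimes>\<^bsub>G1\<^esub> (x \<otimes>\<^bsub>G1\<^esub> y) = y"
  by (simp flip: A.m_assoc)
lemma A_c2[simp]: "x \<in> carrier G1 \<Longrightarrow> y \<in> carrier G1 \<Longrightarrow> x \<otimes>\<^bsub>G1\<^esub> (inv\<^bsub>G1\<^esub> x \<otimes>\<^bsub>G1\<^esub> y) = y"
  by (simp flip: A.m_assoc)
lemma B_c1[simp]: "x \<in> carrier G0 \<Longrightarrow> y \<in> carrier G0 \<Longrightarrow> inv\<^bsub>G0\<^esub> x \<otimes>\<^bsub>G0\<^esub> (x \<otimes>\<^bsub>G0\<^esub> y) = y"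
  by (simp flip: B.m_assoc)
lemma B_c2[simp]: "x \<in> carrier G0 \<Longrightarrow> y \<in> carrier G0 \<Longrightarrow> x \<otimes>\<^bsub>G0\<^esub> (inv\<^bsub>G0\<^esub> x \<otimes>\<^bsub>G0\<^esub> y) = y"
  by (simp flip: B.m_assoc)

lemma H0_central: "a \<in> H0inv G1 G0 act \<Longrightarrow> b \<in> carrier G1 \<Longrightarrow> a \<otimes>\<^bsub>G1\<^esub> b = b \<otimes>\<^bsub>G1\<^esub> a"
proof -
  assume a: "a \<in> H0inv G1 G0 act" and b: "b \<in> carrier G1"
  have ac: "a \<in> carrier G1" and "act (d b) a = a" using a b by (auto simp: H0inv_def)
  hence "b \<otimes>\<^bsub>G1\<^esub> a \<otimes>\<^bsub>G1\<^esub> inv\<^bsub>G1\<^esub> b = a" using peiffer[OF ac b] by simp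
  hence "b \<otimes>\<^bsub>G1\<^esub> a \<otimes>\<^bsub>G1\<^esub> inv\<^bsub>G1\<^esub> b \<otimes>\<^bsub>G1\<^esub> b = a \<otimes>\<^bsub>G1\<^esub> b" by simp
  thus ?thesis using ac b by (simp add: A.m_assoc)
qed

lemma dH0: "a \<in> H0inv G1 G0 act \<Longrightarrow> d a \<in> ZG1 G1 G0 act"
proof -
  assume a: "a \<in> H0inv G1 G0 act"
  have ac: "a \<in> carrier G1" and fx: "\<And>x. x \<in> carrier G0 \<Longrightarrow> act x a = a" using a by (auto simp: H0inv_def)
  have "\<forall>t\<in>carrier G0. d a \<otimes>\<^bsub>G0\<^esub> t = t \<otimes>\<^bsub>G0\<^esub> d a"
  proof
    fix t assume t: "t \<in> carrier G0"
    have "d a = t \<otimes>\<^bsub>G0\<^esub> d a \<otimes>\<^bsub>G0\<^esub> inv\<^bsub>G0\<^esub> t" using d_act[OF t ac] fx[OF t] by simp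
    hence "d a \<otimes>\<^bsub>G0\<^esub> t = t \<otimes>\<^bsub>G0\<^esub> d a \<otimes>\<^bsub>G0\<^esub> inv\<^bsub>G0\<^esub> t \<otimes>\<^bsub>G0\<^esub> t" by simp
    thus "d a \<otimes>\<^bsub>G0\<^esub> t = t \<otimes>\<^bsub>G0\<^esub> d a" using t ac by (simp add: B.m_assoc)
  qed
  moreover have "\<forall>b\<in>carrier G1. act (d a) b = b"
    using peiffer ac H0_central[OF a] by (simp add: A.m_assoc)
  ultimately show ?thesis using ac by (simp add: ZG1_def)
qed

lemma H0_sub: "subgroup (H0inv G1 G0 act) G1"
  by (rule A.subgroupI) (auto simp: H0inv_def)

lemma ZG1_sub: "subgroup (ZG1 G1 G0 act) G0"
proof (rule B.subgroupI)
  show "ZG1 G1 G0 act \<subseteq> carrier G0" by (auto simp: ZG1_def)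
  show "ZG1 G1 G0 act \<noteq> {}" using cm by (auto simp: ZG1_def crossed_module_def)
next
  fix x assume x: "x \<in> ZG1 G1 G0 act"
  hence xc: "x \<in> carrier G0" and c: "\<And>t. t \<in> carrier G0 \<Longrightarrow> x \<otimes>\<^bsub>G0\<^esub> t = t \<otimes>\<^bsub>G0\<^esub> x"
    and tr: "\<And>a. a \<in> carrier G1 \<Longrightarrow> act x a = a" by (auto simp: ZG1_def)
  have "\<forall>t\<in>carrier G0. inv\<^bsub>G0\<^esub> x \<otimes>\<^bsub>G0\<^esub> t = t \<otimes>\<^bsub>G0\<^esub> inv\<^bsub>G0\<^esub> x"
  proof
    fix t assume t: "t \<in> carrier G0"
    have "inv\<^bsub>G0\<^esub> x \<otimes>\<^bsub>G0\<^esub> t = inv\<^bsub>G0\<^esub> x \<otimes>\<^bsub>G0\<^esub> (t \<otimes>\<^bsub>G0\<^esub> x) \<otimes>\<^bsub>G0\<^esub> inv\<^bsub>G0\<^esub> x"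
      using t xc by (simp add: B.m_assoc)
    also have "\<dots> = t \<otimes>\<^bsub>G0\<^esub> inv\<^bsub>G0\<^esub> x" using t xc c[OF t, symmetric] by (simp add: B.m_assoc)
    finally show "inv\<^bsub>G0\<^esub> x \<otimes>\<^bsub>G0\<^esub> t = t \<otimes>\<^bsub>G0\<^esub> inv\<^bsub>G0\<^esub> x" .
  qed
  moreover have "\<forall>a\<in>carrier G1. act (inv\<^bsub>G0\<^esub> x) a = a"
  proof
    fix a assume a: "a \<in> carrier G1"
    have "act (inv\<^bsub>G0\<^esub> x) a = act (inv\<^bsub>G0\<^esub> x) (act x a)" using tr a by simp
    also have "\<dots> = act (inv\<^bsub>G0\<^esub> x \<otimes>\<^bsub>G0\<^esub> x) a" using act_comp[of "inv\<^bsub>G0\<^esub> x" x a] xc a by simp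
    also have "\<dots> = act \<one>\<^bsub>G0\<^esub> a" using xc by simp
    also have "\<dots> = a" using cm a by (simp add: crossed_module_def)
    finally show "act (inv\<^bsub>G0\<^esub> x) a = a" .
  qed
  ultimately show "inv\<^bsub>G0\<^esub> x \<in> ZG1 G1 G0 act" using xc by (simp add: ZG1_def)
next
  fix x y assume x: "x \<in> ZG1 G1 G0 act" and y: "y \<in> ZG1 G1 G0 act"
  have xc: "x \<in> carrier G0" and cx: "\<And>t. t \<in> carrier G0 \<Longrightarrow> x \<otimes>\<^bsub>G0\<^esub> t = t \<otimes>\<^bsub>G0\<^esub> x"
    and tx: "\<And>a. a \<in> carrier G1 \<Longrightarrow> act x a = a" using x by (auto simp: ZG1_def)
  have yc: "y \<in> carrier G0" and cy: "\<And>t. t \<in> carrier G0 \<Longrightarrow> y \<otimes>\<^bsub>G0\<^esub> t = t \<otimes>\<^bsub>G0\<^esub> y"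
    and ty: "\<And>a. a \<in> carrier G1 \<Longrightarrow> act y a = a" using y by (auto simp: ZG1_def)
  have "\<forall>t\<in>carrier G0. x \<otimes>\<^bsub>G0\<^esub> y \<otimes>\<^bsub>G0\<^esub> t = t \<otimes>\<^bsub>G0\<^esub> (x \<otimes>\<^bsub>G0\<^esub> y)"
  proof
    fix t assume t: "t \<in> carrier G0"
    have "x \<otimes>\<^bsub>G0\<^esub> y \<otimes>\<^bsub>G0\<^esub> t = x \<otimes>\<^bsub>G0\<^esub> (t \<otimes>\<^bsub>G0\<^esub> y)"
      using xc yc t cy[OF t] by (simp add: B.m_assoc)
    also have "\<dots> = t \<otimes>\<^bsub>G0\<^esub> (x \<otimes>\<^bsub>G0\<^esub> y)"
      using xc yc t cx[OF t] by (simp flip: B.m_assoc)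
    finally show "x \<otimes>\<^bsub>G0\<^esub> y \<otimes>\<^bsub>G0\<^esub> t = t \<otimes>\<^bsub>G0\<^esub> (x \<otimes>\<^bsub>G0\<^esub> y)" .
  qed
  moreover have "\<forall>a\<in>carrier G1. act (x \<otimes>\<^bsub>G0\<^esub> y) a = a"
    using act_comp xc yc tx ty by simp
  ultimately show "x \<otimes>\<^bsub>G0\<^esub> y \<in> ZG1 G1 G0 act" using xc yc by (simp add: ZG1_def)
qed

definition xi where "xi c = (\<lambda>t\<in>carrier G0. c \<otimes>\<^bsub>G1\<^esub> inv\<^bsub>G1\<^esub> (act t c))"

lemma Zdelta_eq: "Zdelta G1 G0 d act c = (d c, xi c)"
  by (simp add: Zdelta_def xi_def)

lemma Zmult: "(x, \<xi>) \<otimes>\<^bsub>Z0 G1 G0 d act\<^esub> (y, \<eta>) = (x \<otimes>\<^bsub>G0\<^esub> y, \<lambda>t\<in>carrier G0. act x (\<eta> t) \<otimes>\<^bsub>G1\<^esub> \<xi> t)"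
  by (simp add: Z0_def)

lemma xi_H0: "a \<in> H0inv G1 G0 act \<Longrightarrow> c \<in> carrier G1 \<Longrightarrow> xi (c \<otimes>\<^bsub>G1\<^esub> a) = xi c"
  unfolding xi_def
proof (rule ext)
  fix t assume a: "a \<in> H0inv G1 G0 act" and c: "c \<in> carrier G1"
  hence ac: "a \<in> carrier G1" by (auto simp: H0inv_def)
  show "(\<lambda>t\<in>carrier G0. c \<otimes>\<^bsub>G1\<^esub> a \<otimes>\<^bsub>G1\<^esub> inv\<^bsub>G1\<^esub> act t (c \<otimes>\<^bsub>G1\<^esub> a)) t =
          (\<lambda>t\<in>carrier G0. c \<otimes>\<^bsub>G1\<^esub> inv\<^bsub>G1\<^esub> act t c) t"
  proof (cases "t \<in> carrier G0")
    case True
    hence "act t a = a" using a by (auto simp: H0inv_def)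
    thus ?thesis using True ac c by (simp add: A.inv_mult_group A.m_assoc)
  qed simp
qed

lemma xi_one: "xi \<one>\<^bsub>G1\<^esub> = (\<lambda>t\<in>carrier G0. \<one>\<^bsub>G1\<^esub>)"
  unfolding xi_def by (rule restrict_ext) simp

lemma xi_const: "c \<in> carrier G1 \<Longrightarrow> xi c = (\<lambda>t\<in>carrier G0. \<one>\<^bsub>G1\<^esub>) \<Longrightarrow> c \<in> H0inv G1 G0 act"
proof -
  assume c: "c \<in> carrier G1" and e: "xi c = (\<lambda>t\<in>carrier G0. \<one>\<^bsub>G1\<^esub>)"
  have "\<forall>t\<in>carrier G0. act t c = c"
  proof
    fix t assume t: "t \<in> carrier G0"
    have "c \<otimes>\<^bsub>G1\<^esub> inv\<^bsub>G1\<^esub> (act t c) = \<one>\<^bsub>G1\<^esub>" using fun_cong[OF e, of t] t by (simp add: xi_def)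
    thus "act t c = c" using c t by (metis A.inv_equality A.inv_inv A.inv_closed act_closed A.l_inv A.r_inv A.m_assoc A.r_one A.m_closed)
  qed
  thus ?thesis using c by (simp add: H0inv_def)
qed

lemma key: "c \<in> carrier G1 \<Longrightarrow> c' \<in> carrier G1 \<Longrightarrow> x \<in> ZG1 G1 G0 act \<Longrightarrow> y \<in> ZG1 G1 G0 act \<Longrightarrow>
  (d c \<otimes>\<^bsub>G0\<^esub> x, xi c) \<otimes>\<^bsub>Z0 G1 G0 d act\<^esub> (d c' \<otimes>\<^bsub>G0\<^esub> y, xi c') =
  (d (c \<otimes>\<^bsub>G1\<^esub> c') \<otimes>\<^bsub>G0\<^esub> (x \<otimes>\<^bsub>G0\<^esub> y), xi (c \<otimes>\<^bsub>G1\<^esub> c'))"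
proof -
  assume c: "c \<in> carrier G1" and c': "c' \<in> carrier G1" and x: "x \<in> ZG1 G1 G0 act" and y: "y \<in> ZG1 G1 G0 act"
  have xc: "x \<in> carrier G0" and yc: "y \<in> carrier G0" using x y by (auto simp: ZG1_def)
  have xcomm: "x \<otimes>\<^bsub>G0\<^esub> d c' = d c' \<otimes>\<^bsub>G0\<^esub> x" using x c' by (auto simp: ZG1_def)
  have xtr: "\<And>a. a \<in> carrier G1 \<Longrightarrow> act x a = a" using x by (auto simp: ZG1_def)
  have 1: "d c \<otimes>\<^bsub>G0\<^esub> x \<otimes>\<^bsub>G0\<^esub> (d c' \<otimes>\<^bsub>G0\<^esub> y) = d (c \<otimes>\<^bsub>G1\<^esub> c') \<otimes>\<^bsub>G0\<^esub> (x \<otimes>\<^bsub>G0\<^esub> y)"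
    using c c' xc yc xcomm by (simp add: B.m_assoc flip: B.m_assoc[of x "d c'" y])
  have 2: "(\<lambda>t\<in>carrier G0. act (d c \<otimes>\<^bsub>G0\<^esub> x) (xi c' t) \<otimes>\<^bsub>G1\<^esub> xi c t) = xi (c \<otimes>\<^bsub>G1\<^esub> c')"
  proof (rule ext)
    fix t show "(\<lambda>t\<in>carrier G0. act (d c \<otimes>\<^bsub>G0\<^esub> x) (xi c' t) \<otimes>\<^bsub>G1\<^esub> xi c t) t = xi (c \<otimes>\<^bsub>G1\<^esub> c') t"
    proof (cases "t \<in> carrier G0")
      case True
      have xit: "xi c' t = c' \<otimes>\<^bsub>G1\<^esub> inv\<^bsub>G1\<^esub> act t c'" using True by (simp add: xi_def)
      have xict: "xi c t = c \<otimes>\<^bsub>G1\<^esub> inv\<^bsub>G1\<^esub> act t c" using True by (simp add: xi_def)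
      have xicc: "xi (c \<otimes>\<^bsub>G1\<^esub> c') t = c \<otimes>\<^bsub>G1\<^esub> c' \<otimes>\<^bsub>G1\<^esub> inv\<^bsub>G1\<^esub> act t (c \<otimes>\<^bsub>G1\<^esub> c')" using True by (simp add: xi_def)
      have cl: "xi c' t \<in> carrier G1" using xit True c' by simp
      have "act (d c \<otimes>\<^bsub>G0\<^esub> x) (xi c' t) = act (d c) (act x (xi c' t))"
        using act_comp[of "d c" x "xi c' t"] c xc cl by simp
      also have "\<dots> = c \<otimes>\<^bsub>G1\<^esub> xi c' t \<otimes>\<^bsub>G1\<^esub> inv\<^bsub>G1\<^esub> c"
        using xtr[OF cl] peiffer[OF cl c] by simp
      finally have e: "act (d c \<otimes>\<^bsub>G0\<^esub> x) (xi c' t) = c \<otimes>\<^bsub>G1\<^esub> xi c' t \<otimes>\<^bsub>G1\<^esub> inv\<^bsub>G1\<^esub> c" .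
      have "(\<lambda>t\<in>carrier G0. act (d c \<otimes>\<^bsub>G0\<^esub> x) (xi c' t) \<otimes>\<^bsub>G1\<^esub> xi c t) t = act (d c \<otimes>\<^bsub>G0\<^esub> x) (xi c' t) \<otimes>\<^bsub>G1\<^esub> xi c t"
        using True by simp
      also have "\<dots> = c \<otimes>\<^bsub>G1\<^esub> xi c' t \<otimes>\<^bsub>G1\<^esub> inv\<^bsub>G1\<^esub> c \<otimes>\<^bsub>G1\<^esub> xi c t" using e by simp
      also have "\<dots> = xi (c \<otimes>\<^bsub>G1\<^esub> c') t" unfolding xit xict xicc
        using True c c' by (simp add: A.m_assoc A.inv_mult_group)
      finally show ?thesis .
    qed (simp add: xi_def)
  qed
  show ?thesis by (simp add: Zmult 1 2)
qed

lemma delta_j0: "c \<in> carrier G1 \<Longrightarrow> z \<in> carrier G0 \<Longrightarrow>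
   Zdelta G1 G0 d act c \<otimes>\<^bsub>Z0 G1 G0 d act\<^esub> j0 G1 G0 z = (d c \<otimes>\<^bsub>G0\<^esub> z, xi c)"
  by (auto simp: Zdelta_eq j0_def Zmult xi_def intro!: ext)

lemma j0_in: "x \<in> ZG1 G1 G0 act \<Longrightarrow> j0 G1 G0 x \<in> carrier (Z0 G1 G0 d act)"
proof -
  assume x: "x \<in> ZG1 G1 G0 act"
  have xc: "x \<in> carrier G0" and xcomm: "\<And>t. t \<in> carrier G0 \<Longrightarrow> x \<otimes>\<^bsub>G0\<^esub> t = t \<otimes>\<^bsub>G0\<^esub> x"
    and xtr: "\<And>a. a \<in> carrier G1 \<Longrightarrow> act x a = a" using x by (auto simp: ZG1_def)
  have "\<forall>t\<in>carrier G0. \<one>\<^bsub>G0\<^esub> = commutator G0 x t"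
    using xc xcomm by (simp add: commutator_def B.m_assoc)
  thus ?thesis using xc by (auto simp: Z0_def j0_def xtr)
qed

definition "P x = (d ` H0inv G1 G0 act) #>\<^bsub>G0\<lparr>carrier := ZG1 G1 G0 act\<rparr>\<^esub> x"
definition "S x = {(d c \<otimes>\<^bsub>G0\<^esub> x, xi c) | c. c \<in> carrier G1}"

lemma H0c: "a \<in> H0inv G1 G0 act \<Longrightarrow> a \<in> carrier G1" by (simp add: H0inv_def)
lemma ZGc: "x \<in> ZG1 G1 G0 act \<Longrightarrow> x \<in> carrier G0" by (simp add: ZG1_def)

lemma P_eq: "P x = {d a \<otimes>\<^bsub>G0\<^esub> x | a. a \<in> H0inv G1 G0 act}"
  by (auto simp: P_def r_coset_def)

lemma pimap: "x \<in> ZG1 G1 G0 act \<Longrightarrow>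
  pi0_map G1 (Z0 G1 G0 d act) (Zdelta G1 G0 d act) (j0 G1 G0) (P x) = S x"
proof -
  assume x: "x \<in> ZG1 G1 G0 act"
  note xc = ZGc[OF x]
  have "pi0_map G1 (Z0 G1 G0 d act) (Zdelta G1 G0 d act) (j0 G1 G0) (P x) =
     {Zdelta G1 G0 d act c \<otimes>\<^bsub>Z0 G1 G0 d act\<^esub> j0 G1 G0 (d a \<otimes>\<^bsub>G0\<^esub> x) | c a. c \<in> carrier G1 \<and> a \<in> H0inv G1 G0 act}"
    by (auto simp: pi0_map_def set_mult_def P_eq)
  also have "\<dots> = {(d (c \<otimes>\<^bsub>G1\<^esub> a) \<otimes>\<^bsub>G0\<^esub> x, xi (c \<otimes>\<^bsub>G1\<^esub> a)) | c a. c \<in> carrier G1 \<and> a \<in> H0inv G1 G0 act}"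
    using xc by (intro setcompr_cong2) (simp add: delta_j0 xi_H0 H0c B.m_assoc)
  also have "\<dots> = S x"
  proof (rule equalityI)
    show "{(d (c \<otimes>\<^bsub>G1\<^esub> a) \<otimes>\<^bsub>G0\<^esub> x, xi (c \<otimes>\<^bsub>G1\<^esub> a)) | c a. c \<in> carrier G1 \<and> a \<in> H0inv G1 G0 act} \<subseteq> S x"
      unfolding S_def using H0c A.m_closed by blast
    show "S x \<subseteq> {(d (c \<otimes>\<^bsub>G1\<^esub> a) \<otimes>\<^bsub>G0\<^esub> x, xi (c \<otimes>\<^bsub>G1\<^esub> a)) | c a. c \<in> carrier G1 \<and> a \<in> H0inv G1 G0 act}"
    proof
      fix z assume "z \<in> S x"
      then obtain c where c: "c \<in> carrier G1" "z = (d c \<otimes>\<^bsub>G0\<^esub> x, xi c)" unfolding S_def by blast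
      hence "z = (d (c \<otimes>\<^bsub>G1\<^esub> \<one>\<^bsub>G1\<^esub>) \<otimes>\<^bsub>G0\<^esub> x, xi (c \<otimes>\<^bsub>G1\<^esub> \<one>\<^bsub>G1\<^esub>))" by simp
      moreover have "\<one>\<^bsub>G1\<^esub> \<in> H0inv G1 G0 act" using H0_sub by (simp add: subgroup.one_closed)
      ultimately show "z \<in> {(d (c \<otimes>\<^bsub>G1\<^esub> a) \<otimes>\<^bsub>G0\<^esub> x, xi (c \<otimes>\<^bsub>G1\<^esub> a)) | c a. c \<in> carrier G1 \<and> a \<in> H0inv G1 G0 act}"
        using c(1) by blast
    qed
  qed
  finally show ?thesis .
qed

lemma Smult: "x \<in> ZG1 G1 G0 act \<Longrightarrow> y \<in> ZG1 G1 G0 act \<Longrightarrow>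
  S x <#>\<^bsub>Z0 G1 G0 d act\<^esub> S y = S (x \<otimes>\<^bsub>G0\<^esub> y)"
proof
  assume x: "x \<in> ZG1 G1 G0 act" and y: "y \<in> ZG1 G1 G0 act"
  show "S x <#>\<^bsub>Z0 G1 G0 d act\<^esub> S y \<subseteq> S (x \<otimes>\<^bsub>G0\<^esub> y)"
  proof
    fix z assume "z \<in> S x <#>\<^bsub>Z0 G1 G0 d act\<^esub> S y"
    then obtain c c' where cc: "c \<in> carrier G1" "c' \<in> carrier G1"
      "z = (d c \<otimes>\<^bsub>G0\<^esub> x, xi c) \<otimes>\<^bsub>Z0 G1 G0 d act\<^esub> (d c' \<otimes>\<^bsub>G0\<^esub> y, xi c')"
      unfolding set_mult_def S_def by blast
    hence "z = (d (c \<otimes>\<^bsub>G1\<^esub> c') \<otimes>\<^bsub>G0\<^esub> (x \<otimes>\<^bsub>G0\<^esub> y), xi (c \<otimes>\<^bsub>G1\<^esub> c'))"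
      using key[OF cc(1,2) x y] by simp
    moreover have "c \<otimes>\<^bsub>G1\<^esub> c' \<in> carrier G1" using cc by simp
    ultimately show "z \<in> S (x \<otimes>\<^bsub>G0\<^esub> y)" unfolding S_def by blast
  qed
  show "S (x \<otimes>\<^bsub>G0\<^esub> y) \<subseteq> S x <#>\<^bsub>Z0 G1 G0 d act\<^esub> S y"
  proof
    fix z assume "z \<in> S (x \<otimes>\<^bsub>G0\<^esub> y)"
    then obtain c where c: "c \<in> carrier G1" "z = (d c \<otimes>\<^bsub>G0\<^esub> (x \<otimes>\<^bsub>G0\<^esub> y), xi c)" by (auto simp: S_def)
    have "z = (d c \<otimes>\<^bsub>G0\<^esub> x, xi c) \<otimes>\<^bsub>Z0 G1 G0 d act\<^esub> (d \<one>\<^bsub>G1\<^esub> \<otimes>\<^bsub>G0\<^esub> y, xi \<one>\<^bsub>G1\<^esub>)"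
      using key[OF c(1) A.one_closed x y] c by simp
    moreover have "(d c \<otimes>\<^bsub>G0\<^esub> x, xi c) \<in> S x" using c unfolding S_def by blast
    moreover have "(d \<one>\<^bsub>G1\<^esub> \<otimes>\<^bsub>G0\<^esub> y, xi \<one>\<^bsub>G1\<^esub>) \<in> S y" using A.one_closed unfolding S_def by blast
    ultimately show "z \<in> S x <#>\<^bsub>Z0 G1 G0 d act\<^esub> S y" unfolding set_mult_def by blast
  qed
qed

lemma S_coset: "x \<in> ZG1 G1 G0 act \<Longrightarrow> S x \<in> carrier (pi0 G1 (Z0 G1 G0 d act) (Zdelta G1 G0 d act))"
proof -
  assume x: "x \<in> ZG1 G1 G0 act"
  have "S x = (Zdelta G1 G0 d act ` carrier G1) #>\<^bsub>Z0 G1 G0 d act\<^esub> j0 G1 G0 x"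
    using ZGc[OF x] by (auto simp: S_def r_coset_def delta_j0)
  thus ?thesis using j0_in[OF x] by (auto simp: pi0_def FactGroup_def RCOSETS_def)
qed

lemma Pmult: "x \<in> ZG1 G1 G0 act \<Longrightarrow> y \<in> ZG1 G1 G0 act \<Longrightarrow>
  P x <#>\<^bsub>G0\<lparr>carrier := ZG1 G1 G0 act\<rparr>\<^esub> P y = P (x \<otimes>\<^bsub>G0\<^esub> y)"
proof
  assume x: "x \<in> ZG1 G1 G0 act" and y: "y \<in> ZG1 G1 G0 act"
  note xc = ZGc[OF x] and yc = ZGc[OF y]
  have xcomm: "\<And>t. t \<in> carrier G0 \<Longrightarrow> x \<otimes>\<^bsub>G0\<^esub> t = t \<otimes>\<^bsub>G0\<^esub> x" using x by (auto simp: ZG1_def)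
  show "P x <#>\<^bsub>G0\<lparr>carrier := ZG1 G1 G0 act\<rparr>\<^esub> P y \<subseteq> P (x \<otimes>\<^bsub>G0\<^esub> y)"
  proof
    fix z assume "z \<in> P x <#>\<^bsub>G0\<lparr>carrier := ZG1 G1 G0 act\<rparr>\<^esub> P y"
    then obtain a b where ab: "a \<in> H0inv G1 G0 act" "b \<in> H0inv G1 G0 act"
      "z = d a \<otimes>\<^bsub>G0\<^esub> x \<otimes>\<^bsub>G0\<^esub> (d b \<otimes>\<^bsub>G0\<^esub> y)" by (auto simp: set_mult_def P_eq)
    have "z = d (a \<otimes>\<^bsub>G1\<^esub> b) \<otimes>\<^bsub>G0\<^esub> (x \<otimes>\<^bsub>G0\<^esub> y)"
      using ab xc yc H0c xcomm[of "d b"] by (simp add: B.m_assoc flip: B.m_assoc[of x "d b" y])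
    moreover have "a \<otimes>\<^bsub>G1\<^esub> b \<in> H0inv G1 G0 act" using ab H0_sub by (simp add: subgroup.m_closed)
    ultimately show "z \<in> P (x \<otimes>\<^bsub>G0\<^esub> y)" by (auto simp: P_eq)
  qed
  show "P (x \<otimes>\<^bsub>G0\<^esub> y) \<subseteq> P x <#>\<^bsub>G0\<lparr>carrier := ZG1 G1 G0 act\<rparr>\<^esub> P y"
  proof
    fix z assume "z \<in> P (x \<otimes>\<^bsub>G0\<^esub> y)"
    then obtain a where a: "a \<in> H0inv G1 G0 act" "z = d a \<otimes>\<^bsub>G0\<^esub> (x \<otimes>\<^bsub>G0\<^esub> y)" by (auto simp: P_eq)
    have one: "\<one>\<^bsub>G1\<^esub> \<in> H0inv G1 G0 act" using H0_sub by (simp add: subgroup.one_closed)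
    have "z = (d a \<otimes>\<^bsub>G0\<^esub> x) \<otimes>\<^bsub>G0\<^esub> (d \<one>\<^bsub>G1\<^esub> \<otimes>\<^bsub>G0\<^esub> y)" using a xc yc H0c by (simp add: B.m_assoc)
    moreover have "d a \<otimes>\<^bsub>G0\<^esub> x \<in> P x" using a(1) unfolding P_eq by blast
    moreover have "d \<one>\<^bsub>G1\<^esub> \<otimes>\<^bsub>G0\<^esub> y \<in> P y" using one unfolding P_eq by blast
    ultimately show "z \<in> P x <#>\<^bsub>G0\<lparr>carrier := ZG1 G1 G0 act\<rparr>\<^esub> P y"
      unfolding set_mult_def by simp blast
  qed
qed

lemma S_inj: "x \<in> ZG1 G1 G0 act \<Longrightarrow> y \<in> ZG1 G1 G0 act \<Longrightarrow> S x = S y \<Longrightarrow> P x = P y"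
proof -
  assume x: "x \<in> ZG1 G1 G0 act" and y: "y \<in> ZG1 G1 G0 act" and e: "S x = S y"
  note xc = ZGc[OF x] and yc = ZGc[OF y]
  have "(d \<one>\<^bsub>G1\<^esub> \<otimes>\<^bsub>G0\<^esub> x, xi \<one>\<^bsub>G1\<^esub>) \<in> S x" using A.one_closed unfolding S_def by blast
  hence "(x, xi \<one>\<^bsub>G1\<^esub>) \<in> S y" using e xc by simp
  then obtain c where c: "c \<in> carrier G1" "x = d c \<otimes>\<^bsub>G0\<^esub> y" "xi \<one>\<^bsub>G1\<^esub> = xi c" by (auto simp: S_def)
  have cH: "c \<in> H0inv G1 G0 act" using xi_const[OF c(1)] c(3) xi_one by simp
  show "P x = P y"
  proof
    show "P x \<subseteq> P y"
    proof
      fix z assume "z \<in> P x"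
      then obtain a where a: "a \<in> H0inv G1 G0 act" "z = d a \<otimes>\<^bsub>G0\<^esub> x" by (auto simp: P_eq)
      have "z = d (a \<otimes>\<^bsub>G1\<^esub> c) \<otimes>\<^bsub>G0\<^esub> y" using a c yc H0c by (simp add: B.m_assoc)
      moreover have "a \<otimes>\<^bsub>G1\<^esub> c \<in> H0inv G1 G0 act" using a cH H0_sub by (simp add: subgroup.m_closed)
      ultimately show "z \<in> P y" by (auto simp: P_eq)
    qed
    show "P y \<subseteq> P x"
    proof
      fix z assume "z \<in> P y"
      then obtain a where a: "a \<in> H0inv G1 G0 act" "z = d a \<otimes>\<^bsub>G0\<^esub> y" by (auto simp: P_eq)
      have ac: "a \<in> carrier G1" using a H0c by simp
      have "z = d (a \<otimes>\<^bsub>G1\<^esub> inv\<^bsub>G1\<^esub> c) \<otimes>\<^bsub>G0\<^esub> x" using a c yc ac by (simp add: B.m_assoc)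
      moreover have "a \<otimes>\<^bsub>G1\<^esub> inv\<^bsub>G1\<^esub> c \<in> H0inv G1 G0 act" using a cH H0_sub by (simp add: subgroup.m_closed subgroup.m_inv_closed)
      ultimately show "z \<in> P x" by (auto simp: P_eq)
    qed
  qed
qed

lemma part2: "crossed_module (G1\<lparr>carrier := H0inv G1 G0 act\<rparr>) (G0\<lparr>carrier := ZG1 G1 G0 act\<rparr>) d (\<lambda>x a. a)"
  unfolding crossed_module_def
proof (intro conjI ballI)
  show "group (G1\<lparr>carrier := H0inv G1 G0 act\<rparr>)" by (rule A.subgroup_imp_group[OF H0_sub])
  show "group (G0\<lparr>carrier := ZG1 G1 G0 act\<rparr>)" by (rule B.subgroup_imp_group[OF ZG1_sub])
  show "d \<in> hom (G1\<lparr>carrier := H0inv G1 G0 act\<rparr>) (G0\<lparr>carrier := ZG1 G1 G0 act\<rparr>)"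
    by (auto simp: hom_def dH0 H0c)
  fix x assume "x \<in> carrier (G0\<lparr>carrier := ZG1 G1 G0 act\<rparr>)"
  show "(\<lambda>a. a) \<in> iso (G1\<lparr>carrier := H0inv G1 G0 act\<rparr>) (G1\<lparr>carrier := H0inv G1 G0 act\<rparr>)"
    by (auto simp: iso_def hom_def bij_betw_def)
next
  fix x a assume x: "x \<in> carrier (G0\<lparr>carrier := ZG1 G1 G0 act\<rparr>)" and a: "a \<in> carrier (G1\<lparr>carrier := H0inv G1 G0 act\<rparr>)"
  have xZ: "x \<in> ZG1 G1 G0 act" and aH: "a \<in> H0inv G1 G0 act" using x a by auto
  have ac: "a \<in> carrier G1" using aH H0c by simp
  have xc: "x \<in> carrier G0" using ZGc xZ by simp
  have "x \<otimes>\<^bsub>G0\<^esub> d a = d a \<otimes>\<^bsub>G0\<^esub> x" using xZ ac by (auto simp: ZG1_def)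
  hence "x \<otimes>\<^bsub>G0\<^esub> d a \<otimes>\<^bsub>G0\<^esub> inv\<^bsub>G0\<^esub> x = d a" using xc ac by (simp add: B.m_assoc)
  thus "d a = x \<otimes>\<^bsub>G0\<lparr>carrier := ZG1 G1 G0 act\<rparr>\<^esub> d a \<otimes>\<^bsub>G0\<lparr>carrier := ZG1 G1 G0 act\<rparr>\<^esub> inv\<^bsub>G0\<lparr>carrier := ZG1 G1 G0 act\<rparr>\<^esub> x"
    using B.m_inv_consistent[OF ZG1_sub xZ] by simp
next
  fix a b assume a: "a \<in> carrier (G1\<lparr>carrier := H0inv G1 G0 act\<rparr>)" and b: "b \<in> carrier (G1\<lparr>carrier := H0inv G1 G0 act\<rparr>)"
  have aH: "a \<in> H0inv G1 G0 act" and bH: "b \<in> H0inv G1 G0 act" using a b by auto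
  have ac: "a \<in> carrier G1" and bc: "b \<in> carrier G1" using aH bH H0c by auto
  have "b \<otimes>\<^bsub>G1\<^esub> a \<otimes>\<^bsub>G1\<^esub> inv\<^bsub>G1\<^esub> b = a" using H0_central[OF bH ac] ac bc by (simp add: A.m_assoc)
  thus "a = b \<otimes>\<^bsub>G1\<lparr>carrier := H0inv G1 G0 act\<rparr>\<^esub> a \<otimes>\<^bsub>G1\<lparr>carrier := H0inv G1 G0 act\<rparr>\<^esub> inv\<^bsub>G1\<lparr>carrier := H0inv G1 G0 act\<rparr>\<^esub> b"
    using A.m_inv_consistent[OF H0_sub bH] by simp
qed (use cm in \<open>auto simp: crossed_module_def\<close>)

lemma part3: "cm_morphism (G1\<lparr>carrier := H0inv G1 G0 act\<rparr>) (G0\<lparr>carrier := ZG1 G1 G0 act\<rparr>) d (\<lambda>x a. a)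
   G1 (Z0 G1 G0 d act) (Zdelta G1 G0 d act) (Zact act) (\<lambda>a. a) (j0 G1 G0)"
  unfolding cm_morphism_def
proof (intro conjI ballI)
  show "(\<lambda>a. a) \<in> hom (G1\<lparr>carrier := H0inv G1 G0 act\<rparr>) G1" by (auto simp: hom_def H0c)
  show "j0 G1 G0 \<in> hom (G0\<lparr>carrier := ZG1 G1 G0 act\<rparr>) (Z0 G1 G0 d act)"
    unfolding hom_def
  proof (intro CollectI conjI ballI funcsetI)
    fix x assume "x \<in> carrier (G0\<lparr>carrier := ZG1 G1 G0 act\<rparr>)"
    thus "j0 G1 G0 x \<in> carrier (Z0 G1 G0 d act)" using j0_in by simp
  next
    fix x y assume "x \<in> carrier (G0\<lparr>carrier := ZG1 G1 G0 act\<rparr>)" "y \<in> carrier (G0\<lparr>carrier := ZG1 G1 G0 act\<rparr>)"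
    hence xc: "x \<in> carrier G0" using ZGc by simp
    show "j0 G1 G0 (x \<otimes>\<^bsub>G0\<lparr>carrier := ZG1 G1 G0 act\<rparr>\<^esub> y) = j0 G1 G0 x \<otimes>\<^bsub>Z0 G1 G0 d act\<^esub> j0 G1 G0 y"
      using xc by (auto simp: j0_def Zmult intro!: ext)
  qed
next
  fix a assume "a \<in> carrier (G1\<lparr>carrier := H0inv G1 G0 act\<rparr>)"
  hence aH: "a \<in> H0inv G1 G0 act" by simp
  have "xi a = xi \<one>\<^bsub>G1\<^esub>" using xi_H0[OF aH A.one_closed] H0c[OF aH] by simp
  thus "Zdelta G1 G0 d act a = j0 G1 G0 (d a)" by (simp add: Zdelta_eq j0_def xi_one)
next
  fix x a assume "x \<in> carrier (G0\<lparr>carrier := ZG1 G1 G0 act\<rparr>)" "a \<in> carrier (G1\<lparr>carrier := H0inv G1 G0 act\<rparr>)"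
  thus "a = Zact act (j0 G1 G0 x) a" by (auto simp: Zact_def j0_def H0inv_def ZG1_def)
qed

lemma kerZ: "kernel G1 (Z0 G1 G0 d act) (Zdelta G1 G0 d act) = kernel (G1\<lparr>carrier := H0inv G1 G0 act\<rparr>) (G0\<lparr>carrier := ZG1 G1 G0 act\<rparr>) d"
proof -
  have "\<And>a. a \<in> carrier G1 \<Longrightarrow> (xi a = (\<lambda>t\<in>carrier G0. \<one>\<^bsub>G1\<^esub>)) = (a \<in> H0inv G1 G0 act)"
    using xi_const xi_H0 xi_one by (metis A.l_one A.one_closed)
  thus ?thesis by (auto simp: kernel_def Zdelta_eq Z0_def H0c)
qed

lemma part5: "(\<lambda>a. a) \<in> iso (pi1 (G1\<lparr>carrier := H0inv G1 G0 act\<rparr>) (G0\<lparr>carrier := ZG1 G1 G0 act\<rparr>) d) (pi1 G1 (Z0 G1 G0 d act) (Zdelta G1 G0 d act))"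
  by (auto simp: iso_def hom_def bij_betw_def pi1_def kerZ)

lemma carrier_pi0: "carrier (pi0 (G1\<lparr>carrier := H0inv G1 G0 act\<rparr>) (G0\<lparr>carrier := ZG1 G1 G0 act\<rparr>) d) = P ` ZG1 G1 G0 act"
  by (auto simp: pi0_def FactGroup_def RCOSETS_def P_def)

lemma part67: "pi0_map G1 (Z0 G1 G0 d act) (Zdelta G1 G0 d act) (j0 G1 G0) \<in> hom (pi0 (G1\<lparr>carrier := H0inv G1 G0 act\<rparr>) (G0\<lparr>carrier := ZG1 G1 G0 act\<rparr>) d) (pi0 G1 (Z0 G1 G0 d act) (Zdelta G1 G0 d act))
  \<and> inj_on (pi0_map G1 (Z0 G1 G0 d act) (Zdelta G1 G0 d act) (j0 G1 G0)) (carrier (pi0 (G1\<lparr>carrier := H0inv G1 G0 act\<rparr>) (G0\<lparr>carrier := ZG1 G1 G0 act\<rparr>) d))"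
proof (intro conjI)
  show "inj_on (pi0_map G1 (Z0 G1 G0 d act) (Zdelta G1 G0 d act) (j0 G1 G0)) (carrier (pi0 (G1\<lparr>carrier := H0inv G1 G0 act\<rparr>) (G0\<lparr>carrier := ZG1 G1 G0 act\<rparr>) d))"
    unfolding carrier_pi0
  proof (rule inj_onI)
    fix C D assume C: "C \<in> P ` ZG1 G1 G0 act" and D: "D \<in> P ` ZG1 G1 G0 act"
      and e: "pi0_map G1 (Z0 G1 G0 d act) (Zdelta G1 G0 d act) (j0 G1 G0) C = pi0_map G1 (Z0 G1 G0 d act) (Zdelta G1 G0 d act) (j0 G1 G0) D"
    obtain x y where xy: "x \<in> ZG1 G1 G0 act" "y \<in> ZG1 G1 G0 act" "C = P x" "D = P y" using C D by auto
    have "S x = S y" using e xy pimap by simp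
    hence "P x = P y" by (rule S_inj[OF xy(1,2)])
    thus "C = D" using xy(3,4) by simp
  qed
  show "pi0_map G1 (Z0 G1 G0 d act) (Zdelta G1 G0 d act) (j0 G1 G0) \<in> hom (pi0 (G1\<lparr>carrier := H0inv G1 G0 act\<rparr>) (G0\<lparr>carrier := ZG1 G1 G0 act\<rparr>) d) (pi0 G1 (Z0 G1 G0 d act) (Zdelta G1 G0 d act))"
    unfolding hom_def carrier_pi0
  proof (intro CollectI conjI ballI funcsetI)
    fix C assume "C \<in> P ` ZG1 G1 G0 act"
    then obtain x where "x \<in> ZG1 G1 G0 act" "C = P x" by auto
    thus "pi0_map G1 (Z0 G1 G0 d act) (Zdelta G1 G0 d act) (j0 G1 G0) C \<in> carrier (pi0 G1 (Z0 G1 G0 d act) (Zdelta G1 G0 d act))"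
      using pimap S_coset by simp
  next
    fix C D assume "C \<in> P ` ZG1 G1 G0 act" "D \<in> P ` ZG1 G1 G0 act"
    then obtain x y where xy: "x \<in> ZG1 G1 G0 act" "y \<in> ZG1 G1 G0 act" "C = P x" "D = P y" by auto
    have m: "x \<otimes>\<^bsub>G0\<^esub> y \<in> ZG1 G1 G0 act" using xy ZG1_sub by (simp add: subgroup.m_closed)
    show "pi0_map G1 (Z0 G1 G0 d act) (Zdelta G1 G0 d act) (j0 G1 G0) (C \<otimes>\<^bsub>pi0 (G1\<lparr>carrier := H0inv G1 G0 act\<rparr>) (G0\<lparr>carrier := ZG1 G1 G0 act\<rparr>) d\<^esub> D) =
       pi0_map G1 (Z0 G1 G0 d act) (Zdelta G1 G0 d act) (j0 G1 G0) C \<otimes>\<^bsub>pi0 G1 (Z0 G1 G0 d act) (Zdelta G1 G0 d act)\<^esub> pi0_map G1 (Z0 G1 G0 d act) (Zdelta G1 G0 d act) (j0 G1 G0) D"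
    proof -
      have "C \<otimes>\<^bsub>pi0 (G1\<lparr>carrier := H0inv G1 G0 act\<rparr>) (G0\<lparr>carrier := ZG1 G1 G0 act\<rparr>) d\<^esub> D = P (x \<otimes>\<^bsub>G0\<^esub> y)"
        using Pmult[OF xy(1,2)] xy(3,4) by (simp add: pi0_def FactGroup_def)
      moreover have "pi0_map G1 (Z0 G1 G0 d act) (Zdelta G1 G0 d act) (j0 G1 G0) C \<otimes>\<^bsub>pi0 G1 (Z0 G1 G0 d act) (Zdelta G1 G0 d act)\<^esub> pi0_map G1 (Z0 G1 G0 d act) (Zdelta G1 G0 d act) (j0 G1 G0) D
         = S (x \<otimes>\<^bsub>G0\<^esub> y)"
        using Smult[OF xy(1,2)] xy pimap by (simp add: pi0_def FactGroup_def)
      ultimately show ?thesis using pimap[OF m] by simp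
    qed
  qed
qed

lemma part1: "d ` H0inv G1 G0 act \<subseteq> ZG1 G1 G0 act" using dH0 by auto

lemma part4: "inj_on (j0 G1 G0) (carrier (G0\<lparr>carrier := ZG1 G1 G0 act\<rparr>))"
  by (auto simp: inj_on_def j0_def)

end
theorem mainTheorem11:
  fixes G1 :: "'a monoid" and G0 :: "'b monoid"
    and d :: "'a \<Rightarrow> 'b" and act :: "'b \<Rightarrow> 'a \<Rightarrow> 'a"
  assumes cm: "crossed_module G1 G0 d act"
  defines "N1 \<equiv> G1\<lparr>carrier := H0inv G1 G0 act\<rparr>"
      and "N0 \<equiv> G0\<lparr>carrier := ZG1 G1 G0 act\<rparr>"
      and "Z \<equiv> Z0 G1 G0 d act"
      and "\<delta> \<equiv> Zdelta G1 G0 d act"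
  shows "d ` H0inv G1 G0 act \<subseteq> ZG1 G1 G0 act
    \<and> crossed_module N1 N0 d (\<lambda>x a. a)
    \<and> cm_morphism N1 N0 d (\<lambda>x a. a) G1 Z \<delta> (Zact act) (\<lambda>a. a) (j0 G1 G0)
    \<and> inj_on (\<lambda>a. a) (carrier N1) \<and> inj_on (j0 G1 G0) (carrier N0)
    \<and> (\<lambda>a. a) \<in> iso (pi1 N1 N0 d) (pi1 G1 Z \<delta>)
    \<and> pi0_map G1 Z \<delta> (j0 G1 G0) \<in> hom (pi0 N1 N0 d) (pi0 G1 Z \<delta>)
         \<and> inj_on (pi0_map G1 Z \<delta> (j0 G1 G0)) (carrier (pi0 N1 N0 d))"
proof -
  interpret cmod G1 G0 d act by (rule cmod.intro[OF cm])
  show ?thesis unfolding N1_def N0_def Z_def \<delta>_def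
  proof (intro conjI)
    show "inj_on (\<lambda>a. a) (carrier (G1\<lparr>carrier := H0inv G1 G0 act\<rparr>))" by (rule inj_on_id2)
  qed (rule part1 part2 part3 part4 part5 part67[THEN conjunct1] part67[THEN conjunct2])+
qed

end
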